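(* Let $\mathcal H,\mathcal I$ be RKHSs on sets $\mathcal X,\mathcal Z$ with kernels $k_x,k_z$, let $n\in\mathbb N$, $\lambda,\nu>0$, and let $X=(x_1,\dots,x_n)\in\mathcal X^n$, $Z=(z_1,\dots,z_n)\in\mathcal Z^n$ be arbitrary. Suppose $y_i=f_0(x_i)+e_i$, where $e_1,\dots,e_n$ are i.i.d. with mean $0$ and variance $\lambda$, independent of $(X,Z)$ (and of $f_0$ when $f_0$ is random). Let $\hat f_n:=(\hat V+\bar\lambda I)^{-1}\hat C_{xz}(\hat C_z+\bar\nu I)^{-1}\tfrac1nS_z^*Y$, $\mathcal C:=I-(\hat V+\bar\lambda I)^{-1}\hat V$ and $$\Delta\mathcal C:=\bar\lambda\bar\nu\,(\hat V+\bar\lambda I)^{-1}\hat C_{xz}(\hat C_z+\bar\nu I)^{-2}\hat C_{zx}(\hat V+\bar\lambda I)^{-1}.$$ Then $\Delta\mathcal C$ is a non-negative operator, and for every $k_*\in\mathcal H$, $$\langle k_*,\mathcal Ck_*\rangle_{\mathcal H}=\sup_{\|f_0\|_{\mathcal H}=1}\mathbb E_{Y\mid X,Z}\langle k_*,\hat f_n-f_0\rangle_{\mathcal H}^2+\langle k_*,\Delta\mathcal C\,k_*\rangle_{\mathcal H}=\mathbb E_{f_0\sim\mathcal{GP}(0,k_x)}\mathbb E_{Y\mid X,Z}\langle k_*,\hat f_n-f_0\rangle_{\mathcal H}^2+\langle k_*,\Delta\mathcal C\,k_*\rangle_{\mathcal H}.$$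
   Context: $Y=(y_1,\dots,y_n)$. $S_x:\mathcal H\to\mathbb R^n$, $f\mapsto(f(x_1),\dots,f(x_n))$ and $S_z:\mathcal I\to\mathbb R^n$, $g\mapsto(g(z_1),\dots,g(z_n))$, with adjoints $S_x^*,S_z^*$. $\hat C_z:=\frac1nS_z^*S_z$, $\hat C_{zx}:=\frac1nS_z^*S_x$, $\hat C_{xz}:=\hat C_{zx}^*$, $\hat V:=\hat C_{xz}(\hat C_z+\bar\nu I)^{-1}\hat C_{zx}$, $\bar\lambda:=\lambda/n$, $\bar\nu:=\nu/n$. ($\hat f_n$ is the quasi-posterior mean and $\langle k_*,\mathcal Ck_*\rangle_{\mathcal H}$ the quasi-posterior variance of $\langle k_*,f\rangle_{\mathcal H}$ for the GP prior $\mathcal{GP}(0,k_x)$ and dual-IV quasi-likelihood.) For $f_0\sim\mathcal{GP}(0,k_x)$, $\langle k_*,f_0\rangle_{\mathcal H}$ denotes the centred Gaussian variable with variance $\|k_*\|_{\mathcal H}^2$, jointly Gaussian with the process, with $\mathrm{Cov}(\langle k_*,f_0\rangle_{\mathcal H},f_0(x))=k_*(x)$. *)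

theory Defs
  imports "HOL-Analysis.Analysis" "HOL-Probability.Probability"
begin

text \<open>An RKHS on a set is represented (up to isometric isomorphism) by a Hilbert space
  together with its canonical feature map \<open>k :: 'x \<Rightarrow> 'h\<close> (so \<open>k x = k_x(x,\<cdot>)\<close>),
  whose image spans a dense subspace; a vector \<open>f\<close> is the function
  \<open>x \<mapsto> inner f (k x)\<close> (reproducing property), and the kernel is
  \<open>k_x(x,x') = inner (k x) (k x')\<close>.\<close>

definition rkhs_feature :: "('x \<Rightarrow> 'h::{real_inner,complete_space}) \<Rightarrow> bool" where
  "rkhs_feature k \<longleftrightarrow> closure (span (range k)) = UNIV"

definition eval_fun :: "('x \<Rightarrow> 'h::real_inner) \<Rightarrow> 'h \<Rightarrow> 'x \<Rightarrow> real" where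
  "eval_fun k f x = inner f (k x)"

text \<open>Sampling operator \<open>S : f \<mapsto> (f(x_1),\<dots>,f(x_n))\<close> (vectors of \<open>\<real>^n\<close> as
  functions on \<open>{..<n}\<close>, zero outside) and its adjoint \<open>S^* a = \<Sum>_i a_i k(x_i)\<close>.\<close>

definition samp :: "('x \<Rightarrow> 'h::real_inner) \<Rightarrow> nat \<Rightarrow> (nat \<Rightarrow> 'x) \<Rightarrow> 'h \<Rightarrow> nat \<Rightarrow> real" where
  "samp k n X f = (\<lambda>i. if i < n then eval_fun k f (X i) else 0)"

definition samp_adj :: "('x \<Rightarrow> 'h::real_inner) \<Rightarrow> nat \<Rightarrow> (nat \<Rightarrow> 'x) \<Rightarrow> (nat \<Rightarrow> real) \<Rightarrow> 'h" where
  "samp_adj k n X a = (\<Sum>i<n. a i *\<^sub>R k (X i))"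

definition Cz_hat :: "('z \<Rightarrow> 'i::real_inner) \<Rightarrow> nat \<Rightarrow> (nat \<Rightarrow> 'z) \<Rightarrow> 'i \<Rightarrow> 'i" where
  "Cz_hat kz n Z g = (1 / real n) *\<^sub>R samp_adj kz n Z (samp kz n Z g)"

definition Czx_hat :: "('x \<Rightarrow> 'h::real_inner) \<Rightarrow> ('z \<Rightarrow> 'i::real_inner) \<Rightarrow> nat
    \<Rightarrow> (nat \<Rightarrow> 'x) \<Rightarrow> (nat \<Rightarrow> 'z) \<Rightarrow> 'h \<Rightarrow> 'i" where
  "Czx_hat kx kz n X Z f = (1 / real n) *\<^sub>R samp_adj kz n Z (samp kx n X f)"

definition Cxz_hat :: "('x \<Rightarrow> 'h::real_inner) \<Rightarrow> ('z \<Rightarrow> 'i::real_inner) \<Rightarrow> nat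
    \<Rightarrow> (nat \<Rightarrow> 'x) \<Rightarrow> (nat \<Rightarrow> 'z) \<Rightarrow> 'i \<Rightarrow> 'h" where
  "Cxz_hat kx kz n X Z g = (1 / real n) *\<^sub>R samp_adj kx n X (samp kz n Z g)"

text \<open>Inverse of \<open>T + c I\<close> (these operators are bijective for \<open>c > 0\<close>).\<close>
definition resolv :: "('a::real_vector \<Rightarrow> 'a) \<Rightarrow> real \<Rightarrow> 'a \<Rightarrow> 'a" where
  "resolv T c = inv (\<lambda>h. T h + c *\<^sub>R h)"

definition V_hat where
  "V_hat kx kz n X Z nu = Cxz_hat kx kz n X Z \<circ> resolv (Cz_hat kz n Z) (nu / real n) \<circ> Czx_hat kx kz n X Z"

definition f_hat where
  "f_hat kx kz n X Z lam nu Y =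
     resolv (V_hat kx kz n X Z nu) (lam / real n)
       (Cxz_hat kx kz n X Z (resolv (Cz_hat kz n Z) (nu / real n) ((1 / real n) *\<^sub>R samp_adj kz n Z Y)))"

definition C_post where
  "C_post kx kz n X Z lam nu h =
     h - resolv (V_hat kx kz n X Z nu) (lam / real n) (V_hat kx kz n X Z nu h)"

definition DeltaC where
  "DeltaC kx kz n X Z lam nu =
     (\<lambda>h. ((lam / real n) * (nu / real n)) *\<^sub>R
        (resolv (V_hat kx kz n X Z nu) (lam / real n) \<circ> Cxz_hat kx kz n X Z
         \<circ> resolv (Cz_hat kz n Z) (nu / real n) \<circ> resolv (Cz_hat kz n Z) (nu / real n)
         \<circ> Czx_hat kx kz n X Z \<circ> resolv (V_hat kx kz n X Z nu) (lam / real n)) h)"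

definition centred_gaussian :: "'w measure \<Rightarrow> ('w \<Rightarrow> real) \<Rightarrow> real \<Rightarrow> bool" where
  "centred_gaussian M W v \<longleftrightarrow> W \<in> borel_measurable M \<and>
     (if v = 0 then (AE w in M. W w = 0)
      else v > 0 \<and> distributed M lborel W (normal_density 0 (sqrt v)))"

text \<open>\<open>(L, (F x)_x)\<close> is a centred jointly Gaussian family, where \<open>F\<close> is \<open>f_0 \<sim> GP(0,k_x)\<close>
  and \<open>L\<close> is \<open>\<langle>k_*, f_0\<rangle>_H\<close>: every finite linear combination is centred Gaussian with the
  variance given by the covariances \<open>Cov(F x, F x') = k_x(x,x')\<close>, \<open>Var L = \<parallel>k_*\<parallel>^2\<close>,
  \<open>Cov(L, F x) = k_*(x)\<close>.\<close>
definition gp_with_functional ::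
    "'w measure \<Rightarrow> ('x \<Rightarrow> 'h::real_inner) \<Rightarrow> 'h \<Rightarrow> ('x \<Rightarrow> 'w \<Rightarrow> real) \<Rightarrow> ('w \<Rightarrow> real) \<Rightarrow> bool" where
  "gp_with_functional M kx kstar F L \<longleftrightarrow>
     (\<forall>S c a. finite S \<longrightarrow>
        centred_gaussian M (\<lambda>w. a * L w + (\<Sum>x\<in>S. c x * F x w))
          (a\<^sup>2 * (norm kstar)\<^sup>2 + 2 * a * (\<Sum>x\<in>S. c x * eval_fun kx kstar x)
           + (\<Sum>x\<in>S. \<Sum>x'\<in>S. c x * c x' * inner (kx x) (kx x'))))"

end

theory Submission
  imports Defs
begin


lemma delta_helper: fixes b :: "nat \<Rightarrow> real" shows "i < n \<Longrightarrow> (\<Sum>j<n. if i = j then lam * (b i)\<^sup>2 else 0) = lam * (b i)\<^sup>2"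
  by simp

lemma (in prob_space) ee_facts:
  fixes e :: "nat \<Rightarrow> 'a \<Rightarrow> real" and n :: nat
  assumes ind: "indep_vars (\<lambda>_. borel) e {..<n}"
    and sq: "\<forall>i<n. integrable M (\<lambda>w. (e i w)\<^sup>2)"
    and mean: "\<forall>i<n. expectation (e i) = 0"
    and var: "\<forall>i<n. variance (e i) = lam"
    and ij: "i < n" "j < n"
  shows "integrable M (\<lambda>w. e i w * e j w) \<and> expectation (\<lambda>w. e i w * e j w) = (if i = j then lam else 0)"
proof -
  have meas: "\<And>i. i < n \<Longrightarrow> e i \<in> borel_measurable M"
    using ind unfolding indep_vars_def by auto
  have int: "\<And>i. i < n \<Longrightarrow> integrable M (e i)"
    using sq meas square_integrable_imp_integrable by blast
  show ?thesis
  proof (cases "i = j")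
    case True
    then show ?thesis using sq ij var mean by (simp add: power2_eq_square)
  next
    case False
    have "indep_vars (\<lambda>_. borel) e (insert i {j})"
      by (rule indep_vars_subset[OF ind]) (use ij in auto)
    then have iv: "indep_var borel (e i) borel (\<lambda>\<omega>. \<Sum>i\<in>{j}. e i \<omega>)"
      using False by (intro indep_vars_sum) auto
    then have iv: "indep_var borel (e i) borel (e j)" by simp
    show ?thesis using indep_var_lebesgue_integral[OF iv int int] indep_var_integrable[OF iv int int]
        ij mean False by simp
  qed
qed

lemma (in prob_space) noise_expansion:
  fixes G :: "'a \<Rightarrow> real" and e :: "nat \<Rightarrow> 'a \<Rightarrow> real" and n :: nat and b :: "nat \<Rightarrow> real"
  assumes ind: "indep_vars (\<lambda>_. borel) e {..<n}"
    and sq: "\<forall>i<n. integrable M (\<lambda>w. (e i w)\<^sup>2)"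
    and mean: "\<forall>i<n. expectation (e i) = 0"
    and var: "\<forall>i<n. variance (e i) = lam"
    and G2: "integrable M (\<lambda>w. (G w)\<^sup>2)"
    and Ge: "\<forall>i<n. integrable M (\<lambda>w. G w * e i w) \<and> expectation (\<lambda>w. G w * e i w) = 0"
  shows "expectation (\<lambda>w. (G w + (\<Sum>i<n. b i * e i w))\<^sup>2)
         = expectation (\<lambda>w. (G w)\<^sup>2) + lam * (\<Sum>i<n. (b i)\<^sup>2)"
proof -
  have ee: "\<And>i j. i < n \<Longrightarrow> j < n \<Longrightarrow> integrable M (\<lambda>w. e i w * e j w) \<and> expectation (\<lambda>w. e i w * e j w) = (if i = j then lam else 0)"
    using ee_facts[OF ind sq mean var] by blast
  have pw: "\<And>w. (G w + (\<Sum>i<n. b i * e i w))\<^sup>2 =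
      (G w)\<^sup>2 + (\<Sum>i<n. (2 * b i) * (G w * e i w)) + (\<Sum>i<n. \<Sum>j<n. (b i * b j) * (e i w * e j w))"
  proof -
    fix w
    have "(\<Sum>i<n. b i * e i w)\<^sup>2 = (\<Sum>i<n. \<Sum>j<n. (b i * b j) * (e i w * e j w))"
      by (simp add: power2_eq_square sum_product mult_ac)
    moreover have "2 * G w * (\<Sum>i<n. b i * e i w) = (\<Sum>i<n. (2 * b i) * (G w * e i w))"
      by (simp add: sum_distrib_left mult_ac)
    ultimately show "?thesis w" by (simp add: power2_sum)
  qed
  have i1: "integrable M (\<lambda>w. \<Sum>i<n. (2 * b i) * (G w * e i w))"
    by (rule Bochner_Integration.integrable_sum, rule integrable_mult_right) (use Ge in auto)
  have i2: "integrable M (\<lambda>w. \<Sum>i<n. \<Sum>j<n. (b i * b j) * (e i w * e j w))"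
    by (rule Bochner_Integration.integrable_sum, rule Bochner_Integration.integrable_sum, rule integrable_mult_right) (use ee in auto)
  have "expectation (\<lambda>w. (G w + (\<Sum>i<n. b i * e i w))\<^sup>2) =
      expectation (\<lambda>w. (G w)\<^sup>2) + expectation (\<lambda>w. \<Sum>i<n. (2 * b i) * (G w * e i w))
      + expectation (\<lambda>w. \<Sum>i<n. \<Sum>j<n. (b i * b j) * (e i w * e j w))"
    unfolding pw using G2 i1 i2 by (simp add: integral_add)
  also have "expectation (\<lambda>w. \<Sum>i<n. (2 * b i) * (G w * e i w)) = 0"
    using Ge by (subst Bochner_Integration.integral_sum) (auto intro!: integrable_mult_right)
  also have "expectation (\<lambda>w. \<Sum>i<n. \<Sum>j<n. (b i * b j) * (e i w * e j w))
      = (\<Sum>i<n. \<Sum>j<n. (b i * b j) * (if i = j then lam else 0))"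
  proof -
    have "expectation (\<lambda>w. \<Sum>i<n. \<Sum>j<n. (b i * b j) * (e i w * e j w))
        = (\<Sum>i<n. expectation (\<lambda>w. \<Sum>j<n. (b i * b j) * (e i w * e j w)))"
      by (rule Bochner_Integration.integral_sum, rule Bochner_Integration.integrable_sum,
          rule integrable_mult_right) (use ee in auto)
    also have "\<dots> = (\<Sum>i<n. \<Sum>j<n. expectation (\<lambda>w. (b i * b j) * (e i w * e j w)))"
      by (rule sum.cong[OF refl], rule Bochner_Integration.integral_sum,
          rule integrable_mult_right) (use ee in auto)
    also have "\<dots> = (\<Sum>i<n. \<Sum>j<n. (b i * b j) * (if i = j then lam else 0))"
      by (rule sum.cong[OF refl], rule sum.cong[OF refl]) (use ee in auto)
    finally show ?thesis .
  qed
  also have "\<dots> = (\<Sum>i<n. lam * (b i)\<^sup>2)"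
  proof (rule sum.cong[OF refl])
    fix i assume i: "i \<in> {..<n}"
    have "(\<Sum>j<n. (b i * b j) * (if i = j then lam else 0)) = (\<Sum>j<n. if i = j then lam * (b i)\<^sup>2 else 0)"
      by (rule sum.cong) (auto simp: power2_eq_square)
    also have "\<dots> = lam * (b i)\<^sup>2" using i by (intro delta_helper) simp
    finally show "(\<Sum>j<n. (b i * b j) * (if i = j then lam else 0)) = lam * (b i)\<^sup>2" .
  qed
  also have "\<dots> = lam * (\<Sum>i<n. (b i)\<^sup>2)" by (simp add: sum_distrib_left)
  finally show ?thesis by simp
qed



lemma surj_on_span:
  fixes f :: "'a::real_vector \<Rightarrow> 'a"
  assumes lf: "linear f" and fW: "finite W" and sub: "f ` span W \<subseteq> span W" and inj: "inj_on f (span W)"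
  shows "span W \<subseteq> f ` span W"
proof -
  obtain B where B: "B \<subseteq> span W" "independent B" "span W \<subseteq> span B" "card B = dim (span W)"
    using basis_exists[of "span W"] by blast
  have fB: "finite B" using independent_span_bound[OF fW B(2)] B(1) by blast
  have spB: "span B \<subseteq> span W" using B(1) by (metis span_mono span_span)
  have injB: "inj_on f (span B)" using inj spB inj_on_subset by blast
  have indfB: "independent (f ` B)"
    using B(2) injB lf by (metis linear_dependent_inj_imageD)
  have cfB: "card (f ` B) = card B"
    using injB by (meson card_image inj_on_subset span_superset)
  have "span W \<subseteq> span (f ` B)"
  proof
    fix a assume a: "a \<in> span W"
    show "a \<in> span (f ` B)"
    proof (rule ccontr)
      assume na: "a \<notin> span (f ` B)"
      then have "independent (insert a (f ` B))" using indfB by (simp add: independent_insertI)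
      moreover have "insert a (f ` B) \<subseteq> span B"
        using a B(3) sub spB span_superset by fastforce
      ultimately have "card (insert a (f ` B)) \<le> card B"
        using independent_span_bound[OF fB] by blast
      moreover have "a \<notin> f ` B" using na span_base by metis
      moreover have "card (insert a (f ` B)) = Suc (card B)"
        using cfB fB \<open>a \<notin> f ` B\<close> by (simp add: card_insert_if)
      ultimately show False by linarith
    qed
  qed
  also have "span (f ` B) = f ` span B" using lf by (simp add: span_linear_image)
  also have "\<dots> \<subseteq> f ` span W" using spB by blast
  finally show ?thesis .
qed

lemma resolv_props:
  fixes T :: "'a::real_inner \<Rightarrow> 'a"
  assumes lin: "linear T" and fW: "finite W" and rng: "\<And>x. T x \<in> span W"
    and pos: "\<And>x. 0 \<le> inner x (T x)" and sym: "\<And>x y. inner (T x) y = inner x (T y)"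
    and c: "c > 0"
  shows resolv_right: "\<And>y. T (resolv T c y) + c *\<^sub>R resolv T c y = y"
    and resolv_left: "\<And>x. resolv T c (T x + c *\<^sub>R x) = x"
    and resolv_sym: "\<And>x y. inner (resolv T c x) y = inner x (resolv T c y)"
    and resolv_pos: "\<And>x. 0 \<le> inner x (resolv T c x)"
    and resolv_lin: "linear (resolv T c)"
proof -
  define P where "P = (\<lambda>h. T h + c *\<^sub>R h)"
  have linP: "linear P" unfolding P_def
    using lin by (auto intro!: linearI simp: linear_add linear_scale scaleR_add_right)
  have Pdiff: "\<And>x y. P x - P y = P (x - y)" using linP by (simp add: linear_diff)
  have injP: "inj P"
  proof (rule injI)
    fix x y assume "P x = P y"
    then have "P (x - y) = 0" using Pdiff[of x y] by simp
    then have "inner (x - y) (P (x - y)) = 0" by simp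
    then have "inner (x - y) (T (x - y)) + c * inner (x - y) (x - y) = 0"
      unfolding P_def by (simp add: inner_add_right)
    moreover have "0 \<le> inner (x - y) (T (x - y))" by (rule pos)
    ultimately have "inner (x - y) (x - y) \<le> 0" using c
      by (smt (verit) inner_ge_zero mult_pos_pos)
    then show "x = y" by (metis inner_gt_zero_iff not_le right_minus_eq)
  qed
  have surjP: "surj P"
  proof -
    have sub: "P ` span W \<subseteq> span W"
    proof
      fix z assume "z \<in> P ` span W"
      then obtain h where h: "h \<in> span W" "z = P h" by blast
      have "T h + c *\<^sub>R h \<in> span W" by (rule span_add[OF rng span_scale[OF h(1)]])
      then show "z \<in> span W" unfolding h(2) P_def .
    qed
    have sp: "span W \<subseteq> P ` span W"
      using surj_on_span[OF linP fW sub] injP by (meson inj_on_subset subset_UNIV)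
    have pre: "\<exists>u. P u = T y" for y
    proof -
      have "T y \<in> P ` span W" using sp rng[of y] by (rule subsetD)
      then show ?thesis by (metis imageE)
    qed
    show ?thesis unfolding surj_def
    proof
      fix y
      obtain u where u: "P u = T y" using pre by blast
      have tu: "T y - T u = c *\<^sub>R u" using u unfolding P_def by (metis add_diff_cancel_left')
      have e1: "T ((1 / c) *\<^sub>R (y - u)) = (1 / c) *\<^sub>R (T y - T u)"
        using lin by (simp add: linear_scale linear_diff)
      have e2: "c *\<^sub>R ((1 / c) *\<^sub>R (y - u)) = y - u" using c by simp
      have e3: "(1 / c) *\<^sub>R (c *\<^sub>R u) = u" using c by simp
      have "P ((1 / c) *\<^sub>R (y - u)) = y"
        unfolding P_def e1 e2 tu e3 by simp
      then show "\<exists>x. y = P x" by metis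
    qed
  qed
  have R: "resolv T c = inv P" unfolding resolv_def P_def by simp
  have PR: "\<And>y. P (inv P y) = y" using surjP by (simp add: surj_f_inv_f)
  have RP: "\<And>x. inv P (P x) = x" using injP by simp
  show right: "\<And>y. T (resolv T c y) + c *\<^sub>R resolv T c y = y" using PR unfolding R P_def by simp
  show "\<And>x. resolv T c (T x + c *\<^sub>R x) = x" using RP unfolding R P_def by simp
  have Psym: "\<And>x y. inner (P x) y = inner x (P y)"
    unfolding P_def by (simp add: inner_add_left inner_add_right sym)
  show "\<And>x y. inner (resolv T c x) y = inner x (resolv T c y)"
  proof -
    fix x y
    have "inner (inv P x) y = inner (inv P x) (P (inv P y))" using PR by simp
    also have "\<dots> = inner (P (inv P x)) (inv P y)" using Psym by simp
    also have "\<dots> = inner x (inv P y)" using PR by simp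
    finally show "inner (resolv T c x) y = inner x (resolv T c y)" unfolding R .
  qed
  show "\<And>x. 0 \<le> inner x (resolv T c x)"
  proof -
    fix x
    have "inner x (inv P x) = inner (P (inv P x)) (inv P x)" using PR by simp
    also have "\<dots> = inner (inv P x) (T (inv P x)) + c * inner (inv P x) (inv P x)"
      unfolding P_def by (simp add: inner_add_left inner_add_right inner_commute)
    also have "\<dots> \<ge> 0" using pos c by (simp add: add_nonneg_nonneg)
    finally show "0 \<le> inner x (resolv T c x)" unfolding R .
  qed
  show "linear (resolv T c)" unfolding R
  proof (rule linearI)
    fix x y :: 'a and r :: real
    have "P (inv P x + inv P y) = x + y" using PR linP by (simp add: linear_add)
    then show "inv P (x + y) = inv P x + inv P y" using RP by metis
    have "P (r *\<^sub>R inv P x) = r *\<^sub>R x" using PR linP by (simp add: linear_scale)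
    then show "inv P (r *\<^sub>R x) = r *\<^sub>R inv P x" using RP by metis
  qed
qed

lemma samp_adj_expand:
  "samp_adj k n X (samp k' n X' f) = (\<Sum>i<n. inner f (k' (X' i)) *\<^sub>R k (X i))"
  unfolding samp_adj_def samp_def eval_fun_def by (rule sum.cong) auto

lemma Cz_expand: "Cz_hat kz n Z g = (1 / real n) *\<^sub>R (\<Sum>i<n. inner g (kz (Z i)) *\<^sub>R kz (Z i))"
  unfolding Cz_hat_def samp_adj_expand ..

lemma Czx_expand: "Czx_hat kx kz n X Z f = (1 / real n) *\<^sub>R (\<Sum>i<n. inner f (kx (X i)) *\<^sub>R kz (Z i))"
  unfolding Czx_hat_def samp_adj_expand ..

lemma Cxz_expand: "Cxz_hat kx kz n X Z g = (1 / real n) *\<^sub>R (\<Sum>i<n. inner g (kz (Z i)) *\<^sub>R kx (X i))"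
  unfolding Cxz_hat_def samp_adj_expand ..

lemma inner_expand:
  "inner h (a *\<^sub>R (\<Sum>i<n. inner g (u i) *\<^sub>R v i)) = a * (\<Sum>i<n. inner g (u i) * inner h (v i))"
  by (simp add: inner_sum_right)

lemma linear_expand:
  fixes u :: "nat \<Rightarrow> 'a::real_inner" and v :: "nat \<Rightarrow> 'b::real_inner"
  shows "linear (\<lambda>g. a *\<^sub>R (\<Sum>i<n. inner g (u i) *\<^sub>R v i))"
proof (rule linearI)
  fix x y :: 'a and r :: real
  show "a *\<^sub>R (\<Sum>i<n. inner (x + y) (u i) *\<^sub>R v i) = a *\<^sub>R (\<Sum>i<n. inner x (u i) *\<^sub>R v i) + a *\<^sub>R (\<Sum>i<n. inner y (u i) *\<^sub>R v i)"
    by (simp add: inner_add_left scaleR_add_left sum.distrib scaleR_add_right)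
  show "a *\<^sub>R (\<Sum>i<n. inner (r *\<^sub>R x) (u i) *\<^sub>R v i) = r *\<^sub>R (a *\<^sub>R (\<Sum>i<n. inner x (u i) *\<^sub>R v i))"
    by (simp add: scaleR_sum_right mult_ac)
qed

lemma span_expand:
  "a *\<^sub>R (\<Sum>i<n. c i *\<^sub>R v i) \<in> span (v ` {..<n})"
  by (intro span_scale span_sum) (auto intro: span_base)

lemma op_facts:
  fixes kx :: "'x \<Rightarrow> 'h::{real_inner,complete_space}"
    and kz :: "'z \<Rightarrow> 'i::{real_inner,complete_space}"
    and n :: nat and lam nu :: real and X :: "nat \<Rightarrow> 'x" and Z :: "nat \<Rightarrow> 'z" and k :: 'h
  assumes n_pos: "n > 0" and lam_pos: "lam > 0" and nu_pos: "nu > 0"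
  obtains r :: 'h and b :: "nat \<Rightarrow> real" where
    "\<forall>h. 0 \<le> inner h (DeltaC kx kz n X Z lam nu h)"
    "\<forall>g h. inner g (DeltaC kx kz n X Z lam nu h) = inner (DeltaC kx kz n X Z lam nu g) h"
    "inner k (C_post kx kz n X Z lam nu k) = (lam / n) * inner k r"
    "\<forall>Y. inner k (f_hat kx kz n X Z lam nu Y) = (\<Sum>i<n. b i * Y i)"
    "(\<Sum>i<n. b i *\<^sub>R kx (X i)) = k - (lam / n) *\<^sub>R r"
    "(lam / n) * inner k r = (lam / n)\<^sup>2 * inner r r + lam * (\<Sum>i<n. (b i)\<^sup>2) + inner k (DeltaC kx kz n X Z lam nu k)"
proof -
  define ln where "ln = lam / real n"
  define nn where "nn = nu / real n"
  have ln: "ln > 0" unfolding ln_def using n_pos lam_pos by simp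
  have nn: "nn > 0" unfolding nn_def using n_pos nu_pos by simp
  define Cz where "Cz = Cz_hat kz n Z"
  define Czx where "Czx = Czx_hat kx kz n X Z"
  define Cxz where "Cxz = Cxz_hat kx kz n X Z"
  define A where "A = resolv Cz nn"
  define V where "V = V_hat kx kz n X Z nu"
  define R where "R = resolv V ln"
  have VA: "V = Cxz \<circ> A \<circ> Czx" unfolding V_def V_hat_def Cxz_def A_def Cz_def Czx_def nn_def ..
  have adj: "\<And>f g. inner (Czx f) g = inner f (Cxz g)"
    unfolding Czx_def Cxz_def Czx_expand Cxz_expand
    by (simp add: inner_sum_left inner_sum_right mult_ac inner_commute)
  have Cz_lin: "linear Cz" unfolding Cz_def Cz_expand by (rule linear_expand)
  have Czx_lin: "linear Czx" unfolding Czx_def Czx_expand by (rule linear_expand)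
  have Cxz_lin: "linear Cxz" unfolding Cxz_def Cxz_expand by (rule linear_expand)
  have Cz_rng: "\<And>g. Cz g \<in> span ((\<lambda>i. kz (Z i)) ` {..<n})"
    unfolding Cz_def Cz_expand by (rule span_expand)
  have Cxz_rng: "\<And>g. Cxz g \<in> span ((\<lambda>i. kx (X i)) ` {..<n})"
    unfolding Cxz_def Cxz_expand by (rule span_expand)
  have Cz_inner: "\<And>h g. inner h (Cz g) = (1 / real n) * (\<Sum>i<n. inner g (kz (Z i)) * inner h (kz (Z i)))"
    unfolding Cz_def Cz_expand by (rule inner_expand)
  have Cz_pos: "\<And>g. 0 \<le> inner g (Cz g)"
    unfolding Cz_inner by (rule mult_nonneg_nonneg, simp, rule sum_nonneg, simp)
  have Cz_sym: "\<And>g h. inner (Cz g) h = inner g (Cz h)"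
    by (simp add: inner_commute[of "Cz _"] Cz_inner mult_ac)
  note Aprops = resolv_props[of Cz "(\<lambda>i. kz (Z i)) ` {..<n}" nn, OF Cz_lin _ Cz_rng Cz_pos Cz_sym nn, simplified, folded A_def]
  have A_right: "\<And>y. Cz (A y) + nn *\<^sub>R A y = y" using Aprops by blast
  have A_sym: "\<And>x y. inner (A x) y = inner x (A y)" using Aprops by blast
  have A_pos: "\<And>x. 0 \<le> inner x (A x)" using Aprops by blast
  have A_lin: "linear A" using Aprops by blast
  have V_lin: "linear V" unfolding VA using Cxz_lin A_lin Czx_lin by (intro linear_compose)
  have V_rng: "\<And>g. V g \<in> span ((\<lambda>i. kx (X i)) ` {..<n})" unfolding VA by (simp add: Cxz_rng)
  have V_pos: "\<And>f. 0 \<le> inner f (V f)"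
  proof -
    fix f have "inner f (V f) = inner (Czx f) (A (Czx f))" unfolding VA by (simp add: adj)
    then show "0 \<le> inner f (V f)" using A_pos by simp
  qed
  have V_sym: "\<And>f g. inner (V f) g = inner f (V g)"
  proof -
    fix f g
    have "inner (V f) g = inner (A (Czx f)) (Czx g)" unfolding VA by (simp add: adj inner_commute)
    also have "\<dots> = inner (Czx f) (A (Czx g))" by (rule A_sym)
    also have "\<dots> = inner f (V g)" unfolding VA by (simp add: adj)
    finally show "inner (V f) g = inner f (V g)" .
  qed
  note Rprops = resolv_props[of V "(\<lambda>i. kx (X i)) ` {..<n}" ln, OF V_lin _ V_rng V_pos V_sym ln, simplified, folded R_def]
  have R_right: "\<And>y. V (R y) + ln *\<^sub>R R y = y" using Rprops by blast
  have R_left: "\<And>x. R (V x + ln *\<^sub>R x) = x" using Rprops by blast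
  have R_sym: "\<And>x y. inner (R x) y = inner x (R y)" using Rprops by blast
  have R_lin: "linear R" using Rprops by blast
  have DC: "\<And>h. DeltaC kx kz n X Z lam nu h = (ln * nn) *\<^sub>R R (Cxz (A (A (Czx (R h)))))"
    unfolding DeltaC_def R_def A_def V_def Cxz_def Czx_def Cz_def ln_def nn_def by simp
  have key: "\<And>g h. inner g (DeltaC kx kz n X Z lam nu h) = ln * nn * inner (A (Czx (R g))) (A (Czx (R h)))"
  proof -
    fix g h
    have "inner g (R (Cxz (A (A (Czx (R h)))))) = inner (R g) (Cxz (A (A (Czx (R h)))))"
      by (simp add: R_sym)
    also have "\<dots> = inner (Czx (R g)) (A (A (Czx (R h))))" by (simp add: adj)
    also have "\<dots> = inner (A (Czx (R g))) (A (Czx (R h)))" by (simp add: A_sym)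
    finally show "inner g (DeltaC kx kz n X Z lam nu h) = ln * nn * inner (A (Czx (R g))) (A (Czx (R h)))"
      unfolding DC by simp
  qed
  define r where "r = R k"
  define w where "w = A (Czx r)"
  define b where "b = (\<lambda>i. (1 / real n) * inner w (kz (Z i)))"
  show ?thesis
  proof
    show "\<forall>h. 0 \<le> inner h (DeltaC kx kz n X Z lam nu h)"
      using ln nn by (simp add: key)
    show "\<forall>g h. inner g (DeltaC kx kz n X Z lam nu h) = inner (DeltaC kx kz n X Z lam nu g) h"
    proof (intro allI)
      fix g h
      have "inner (DeltaC kx kz n X Z lam nu g) h = inner h (DeltaC kx kz n X Z lam nu g)"
        by (rule inner_commute)
      then show "inner g (DeltaC kx kz n X Z lam nu h) = inner (DeltaC kx kz n X Z lam nu g) h"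
        using key[of g h] key[of h g] inner_commute[of "A (Czx (R g))" "A (Czx (R h))"] by simp
    qed
    have RV: "R (V k) = k - ln *\<^sub>R r"
    proof -
      have "R (V k) + ln *\<^sub>R R k = k" using R_left[of k] R_lin by (simp add: linear_add linear_scale)
      then show ?thesis unfolding r_def by (simp add: algebra_simps)
    qed
    show "inner k (C_post kx kz n X Z lam nu k) = (lam / n) * inner k r"
    proof -
      have "C_post kx kz n X Z lam nu k = k - R (V k)" unfolding C_post_def R_def V_def ln_def ..
      then show ?thesis unfolding RV by (simp add: ln_def)
    qed
    show "\<forall>Y. inner k (f_hat kx kz n X Z lam nu Y) = (\<Sum>i<n. b i * Y i)"
    proof
      fix Y
      have "f_hat kx kz n X Z lam nu Y = R (Cxz (A ((1 / real n) *\<^sub>R samp_adj kz n Z Y)))"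
        unfolding f_hat_def R_def V_def A_def Cxz_def Cz_def ln_def nn_def ..
      then have "inner k (f_hat kx kz n X Z lam nu Y) = inner r (Cxz (A ((1 / real n) *\<^sub>R samp_adj kz n Z Y)))"
        by (simp add: r_def R_sym)
      also have "\<dots> = inner w ((1 / real n) *\<^sub>R samp_adj kz n Z Y)"
        unfolding w_def adj[symmetric] A_sym ..
      also have "\<dots> = (\<Sum>i<n. b i * Y i)"
        unfolding samp_adj_def b_def by (simp add: inner_sum_right sum_distrib_left mult_ac)
      finally show "inner k (f_hat kx kz n X Z lam nu Y) = (\<Sum>i<n. b i * Y i)" .
    qed
    have Vr: "V r = k - ln *\<^sub>R r" using R_right[of k] unfolding r_def by (simp add: algebra_simps)
    have Cxzw: "Cxz w = V r" unfolding VA w_def by simp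
    show "(\<Sum>i<n. b i *\<^sub>R kx (X i)) = k - (lam / n) *\<^sub>R r"
      unfolding Vr[folded Cxzw, unfolded ln_def, symmetric] Cxz_def Cxz_expand b_def
      by (simp add: scaleR_sum_right)
    have dk: "inner k (DeltaC kx kz n X Z lam nu k) = ln * nn * inner w w"
      unfolding key w_def r_def ..
    have bsq: "lam * (\<Sum>i<n. (b i)\<^sup>2) = ln * inner w (Cz w)"
      unfolding Cz_inner b_def ln_def
      by (simp add: power2_eq_square sum_distrib_left mult_ac)
    have Czxr: "Czx r = Cz w + nn *\<^sub>R w" unfolding w_def using A_right by simp
    have "inner k r = inner (V r + ln *\<^sub>R r) r" using R_right[of k] unfolding r_def by simp
    also have "\<dots> = inner (V r) r + ln * inner r r" by (simp add: inner_add_left)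
    also have "inner (V r) r = inner w (Czx r)"
      unfolding Cxzw[symmetric] by (simp add: adj[symmetric] inner_commute)
    also have "\<dots> = inner w (Cz w) + nn * inner w w" unfolding Czxr by (simp add: inner_add_right)
    finally have "inner k r = inner w (Cz w) + nn * inner w w + ln * inner r r" .
    then show "(lam / n) * inner k r = (lam / n)\<^sup>2 * inner r r + lam * (\<Sum>i<n. (b i)\<^sup>2) + inner k (DeltaC kx kz n X Z lam nu k)"
      unfolding bsq dk ln_def[symmetric] by (simp add: power2_eq_square algebra_simps)
  qed
qed



lemma sup_sq:
  fixes d :: "'h::real_inner"
  assumes nt: "\<exists>f::'h. f \<noteq> 0"
  shows "Sup {(inner f0 d)\<^sup>2 + q | f0. norm f0 = 1} = inner d d + q"
proof (rule cSup_eq_maximum)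
  show "inner d d + q \<in> {(inner f0 d)\<^sup>2 + q | f0. norm f0 = 1}"
  proof (cases "d = 0")
    case True
    obtain f :: 'h where f: "f \<noteq> 0" using nt by blast
    have "norm ((1 / norm f) *\<^sub>R f) = 1" using f by simp
    moreover have "inner d d + q = (inner ((1 / norm f) *\<^sub>R f) d)\<^sup>2 + q" using True by simp
    ultimately show ?thesis by blast
  next
    case False
    have n1: "norm ((1 / norm d) *\<^sub>R d) = 1" using False by simp
    have "(inner ((1 / norm d) *\<^sub>R d) d)\<^sup>2 = inner d d"
      using False by (simp add: power2_norm_eq_inner[symmetric] power2_eq_square)
    then show ?thesis using n1 by (metis (mono_tags, lifting) mem_Collect_eq)
  qed
  fix x assume "x \<in> {(inner f0 d)\<^sup>2 + q | f0. norm f0 = 1}"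
  then obtain f0 where f0: "norm f0 = 1" "x = (inner f0 d)\<^sup>2 + q" by blast
  have "\<bar>inner f0 d\<bar> \<le> \<bar>norm d\<bar>" using Cauchy_Schwarz_ineq2[of f0 d] f0 by simp
  then have "(inner f0 d)\<^sup>2 \<le> (norm d)\<^sup>2" by (metis abs_le_square_iff abs_norm_cancel)
  then show "x \<le> inner d d + q" using f0 by (simp add: power2_norm_eq_inner)
qed

lemma gauss_moments:
  assumes M: "prob_space M" and g: "centred_gaussian M W v"
  shows "integrable M W \<and> integrable M (\<lambda>w. (W w)\<^sup>2) \<and> integral\<^sup>L M W = 0
         \<and> integral\<^sup>L M (\<lambda>w. (W w)\<^sup>2) = v"
proof -
  interpret prob_space M by fact
  have Wm[measurable]: "W \<in> borel_measurable M" using g unfolding centred_gaussian_def by blast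
  show ?thesis
  proof (cases "v = 0")
    case True
    then have ae: "AE w in M. W w = 0" using g unfolding centred_gaussian_def by simp
    have ae2: "AE w in M. (W w)\<^sup>2 = 0" using ae by eventually_elim simp
    have i1: "integrable M W"
      by (rule integrable_cong_AE_imp[of M "\<lambda>_. 0"]) (use ae in auto)
    have i2: "integrable M (\<lambda>w. (W w)\<^sup>2)"
      by (rule integrable_cong_AE_imp[of M "\<lambda>_. 0"]) (use ae2 in auto)
    have e1: "integral\<^sup>L M W = 0"
      using integral_cong_AE[of W M "\<lambda>_. 0"] ae by simp
    have e2: "integral\<^sup>L M (\<lambda>w. (W w)\<^sup>2) = 0"
      using integral_cong_AE[of "\<lambda>w. (W w)\<^sup>2" M "\<lambda>_. 0"] ae2 by simp
    show ?thesis using i1 i2 e1 e2 True by simp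
  next
    case False
    then have vpos: "v > 0" and D: "distributed M lborel W (normal_density 0 (sqrt v))"
      using g unfolding centred_gaussian_def by auto
    have sp: "0 < sqrt v" using vpos by simp
    have i1: "integrable M W"
      using distributed_integrable[OF D, of "\<lambda>x. x"]
        integrable.intros[OF normal_moment_nz_1[OF sp, of 0]] by simp
    have "integrable lborel (\<lambda>x. normal_density 0 (sqrt v) x * (x - 0) ^ (2 * 1))"
      using integrable.intros[OF normal_moment_even[OF sp, of 0 1]] .
    then have i2: "integrable M (\<lambda>w. (W w)\<^sup>2)"
      using distributed_integrable[OF D, of "\<lambda>x. x\<^sup>2"] by simp
    have e1: "integral\<^sup>L M W = 0" using normal_distributed_expectation[OF sp D] .
    have "variance W = (sqrt v)\<^sup>2" using normal_distributed_variance[OF sp D] .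
    then have e2: "integral\<^sup>L M (\<lambda>w. (W w)\<^sup>2) = v" using e1 vpos by simp
    show ?thesis using i1 i2 e1 e2 by simp
  qed
qed

theorem mainTheorem5:
  fixes kx :: "'x \<Rightarrow> 'h::{real_inner,complete_space}"
    and kz :: "'z \<Rightarrow> 'i::{real_inner,complete_space}"
    and n :: nat and lam nu :: real
    and X :: "nat \<Rightarrow> 'x" and Z :: "nat \<Rightarrow> 'z"
    and M :: "'w measure" and e :: "nat \<Rightarrow> 'w \<Rightarrow> real"
    and F :: "'x \<Rightarrow> 'w \<Rightarrow> real" and L :: "'w \<Rightarrow> real"
    and kstar :: 'h
  assumes rkx: "rkhs_feature kx" and rkz: "rkhs_feature kz"
    and Hnontriv: "\<exists>f::'h. f \<noteq> 0"
    and n_pos: "n > 0" and lam_pos: "lam > 0" and nu_pos: "nu > 0"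
    and M: "prob_space M"
    and e_indep: "prob_space.indep_vars M (\<lambda>_. borel) e {..<n}"
    and e_ident: "\<forall>i<n. distr M borel (e i) = distr M borel (e 0)"
    and e_sq: "\<forall>i<n. integrable M (\<lambda>w. (e i w)\<^sup>2)"
    and e_mean: "\<forall>i<n. prob_space.expectation M (e i) = 0"
    and e_var: "\<forall>i<n. prob_space.variance M (e i) = lam"
    and gp: "gp_with_functional M kx kstar F L"
    and e_indep_gp: "prob_space.indep_set M
        (sigma_sets (space M) ({L -` B \<inter> space M | B. B \<in> sets borel}
                               \<union> (\<Union>x. {F x -` B \<inter> space M | B. B \<in> sets borel})))
        (sigma_sets (space M) (\<Union>i<n. {e i -` B \<inter> space M | B. B \<in> sets borel}))"
  shows "(\<forall>h. 0 \<le> inner h (DeltaC kx kz n X Z lam nu h)) \<and>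
         (\<forall>g h. inner g (DeltaC kx kz n X Z lam nu h) = inner (DeltaC kx kz n X Z lam nu g) h) \<and>
         inner kstar (C_post kx kz n X Z lam nu kstar) =
           Sup {prob_space.expectation M (\<lambda>w.
                  (inner kstar (f_hat kx kz n X Z lam nu (\<lambda>i. eval_fun kx f0 (X i) + e i w))
                   - inner kstar f0)\<^sup>2) | f0. norm f0 = 1}
           + inner kstar (DeltaC kx kz n X Z lam nu kstar) \<and>
         inner kstar (C_post kx kz n X Z lam nu kstar) =
           prob_space.expectation M (\<lambda>w.
                  (inner kstar (f_hat kx kz n X Z lam nu (\<lambda>i. F (X i) w + e i w)) - L w)\<^sup>2)
           + inner kstar (DeltaC kx kz n X Z lam nu kstar)"
proof -
  interpret prob_space M by fact
  obtain r b where
    F1: "\<forall>h. 0 \<le> inner h (DeltaC kx kz n X Z lam nu h)" and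
    F2: "\<forall>g h. inner g (DeltaC kx kz n X Z lam nu h) = inner (DeltaC kx kz n X Z lam nu g) h" and
    F3: "inner kstar (C_post kx kz n X Z lam nu kstar) = (lam / n) * inner kstar r" and
    F4: "\<forall>Y. inner kstar (f_hat kx kz n X Z lam nu Y) = (\<Sum>i<n. b i * Y i)" and
    F5: "(\<Sum>i<n. b i *\<^sub>R kx (X i)) = kstar - (lam / n) *\<^sub>R r" and
    F6: "(lam / n) * inner kstar r = (lam / n)\<^sup>2 * inner r r + lam * (\<Sum>i<n. (b i)\<^sup>2) + inner kstar (DeltaC kx kz n X Z lam nu kstar)"
    by (rule op_facts[OF n_pos lam_pos nu_pos, of kx kz X Z kstar])
  define ln where "ln = lam / real n"
  define q where "q = lam * (\<Sum>i<n. (b i)\<^sup>2)"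
  define DD where "DD = inner kstar (DeltaC kx kz n X Z lam nu kstar)"
  have emeas: "\<And>i. i < n \<Longrightarrow> e i \<in> borel_measurable M"
    using e_indep unfolding indep_vars_def by auto
  have eint: "\<And>i. i < n \<Longrightarrow> integrable M (e i)"
    using e_sq emeas square_integrable_imp_integrable by blast
  note NE = noise_expansion[OF e_indep e_sq e_mean e_var]
  have val: "expectation (\<lambda>w. (inner kstar (f_hat kx kz n X Z lam nu (\<lambda>i. eval_fun kx f0 (X i) + e i w))
                   - inner kstar f0)\<^sup>2) = (inner f0 (ln *\<^sub>R r))\<^sup>2 + q" for f0
  proof -
    define a where "a = - (ln * inner f0 r)"
    have sb: "(\<Sum>i<n. b i * eval_fun kx f0 (X i)) = inner f0 kstar - ln * inner f0 r"
    proof -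
      have "(\<Sum>i<n. b i * eval_fun kx f0 (X i)) = inner f0 (\<Sum>i<n. b i *\<^sub>R kx (X i))"
        unfolding eval_fun_def by (simp add: inner_sum_right)
      then show ?thesis unfolding F5 ln_def by (simp add: inner_diff_right)
    qed
    have pw: "(inner kstar (f_hat kx kz n X Z lam nu (\<lambda>i. eval_fun kx f0 (X i) + e i w)) - inner kstar f0)\<^sup>2
        = (a + (\<Sum>i<n. b i * e i w))\<^sup>2" for w
    proof -
      have "inner kstar (f_hat kx kz n X Z lam nu (\<lambda>i. eval_fun kx f0 (X i) + e i w))
          = (\<Sum>i<n. b i * eval_fun kx f0 (X i)) + (\<Sum>i<n. b i * e i w)"
        using F4 by (simp add: distrib_left sum.distrib)
      then show ?thesis unfolding sb a_def by (simp add: inner_commute)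
    qed
    have "expectation (\<lambda>w. (a + (\<Sum>i<n. b i * e i w))\<^sup>2) = expectation (\<lambda>w. a\<^sup>2) + q"
      unfolding q_def
      by (rule NE) (use eint e_mean in auto)
    then show ?thesis unfolding pw a_def by (simp add: power2_eq_square prob_space)
  qed
  have sup: "Sup {expectation (\<lambda>w.
                  (inner kstar (f_hat kx kz n X Z lam nu (\<lambda>i. eval_fun kx f0 (X i) + e i w))
                   - inner kstar f0)\<^sup>2) | f0. norm f0 = 1} = ln\<^sup>2 * inner r r + q"
    unfolding val using sup_sq[OF Hnontriv, of "ln *\<^sub>R r" q] by (simp add: power2_eq_square)
  define G where "G = (\<lambda>w. (\<Sum>i<n. b i * F (X i) w) - L w)"
  define Sx where "Sx = X ` {..<n}"
  define c where "c = (\<lambda>x. \<Sum>i\<in>{i\<in>{..<n}. X i = x}. b i)"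
  have fSx: "finite Sx" unfolding Sx_def by simp
  have grp: "(\<Sum>x\<in>Sx. c x * u x) = (\<Sum>i<n. b i * u (X i))" for u :: "'x \<Rightarrow> real"
  proof -
    have "(\<Sum>x\<in>Sx. c x * u x) = (\<Sum>x\<in>Sx. \<Sum>i\<in>{i\<in>{..<n}. X i = x}. b i * u (X i))"
      unfolding c_def by (rule sum.cong) (auto simp: sum_distrib_right)
    also have "\<dots> = (\<Sum>i<n. b i * u (X i))"
      by (rule sum.group) (auto simp: Sx_def)
    finally show ?thesis .
  qed
  have grpv: "(\<Sum>x\<in>Sx. c x *\<^sub>R kx x) = (\<Sum>i<n. b i *\<^sub>R kx (X i))"
  proof -
    have "(\<Sum>x\<in>Sx. c x *\<^sub>R kx x) = (\<Sum>x\<in>Sx. \<Sum>i\<in>{i\<in>{..<n}. X i = x}. b i *\<^sub>R kx (X i))"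
      unfolding c_def by (rule sum.cong) (auto simp: scaleR_sum_left)
    also have "\<dots> = (\<Sum>i<n. b i *\<^sub>R kx (X i))"
      by (rule sum.group) (auto simp: Sx_def)
    finally show ?thesis .
  qed
  have Geq: "(\<lambda>w. (-1) * L w + (\<Sum>x\<in>Sx. c x * F x w)) = G"
    unfolding G_def by (rule ext) (simp add: grp)
  define s where "s = (\<Sum>x\<in>Sx. c x *\<^sub>R kx x)"
  have ks: "kstar - s = ln *\<^sub>R r" unfolding s_def grpv F5 ln_def by simp
  have vv: "(-1)\<^sup>2 * (norm kstar)\<^sup>2 + 2 * (-1) * (\<Sum>x\<in>Sx. c x * eval_fun kx kstar x)
           + (\<Sum>x\<in>Sx. \<Sum>x'\<in>Sx. c x * c x' * inner (kx x) (kx x')) = ln\<^sup>2 * inner r r"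
  proof -
    have "inner (kstar - s) (kstar - s) = inner kstar kstar - 2 * inner kstar s + inner s s"
      by (simp add: inner_diff_left inner_diff_right inner_commute)
    also have "inner kstar s = (\<Sum>x\<in>Sx. c x * eval_fun kx kstar x)"
      unfolding s_def eval_fun_def by (simp add: inner_sum_right)
    also have "inner s s = (\<Sum>x\<in>Sx. \<Sum>x'\<in>Sx. c x * c x' * inner (kx x) (kx x'))"
      unfolding s_def by (simp add: inner_sum_right inner_sum_left sum_distrib_left mult_ac, intro sum.cong refl, simp add: inner_commute)
    finally have "inner (kstar - s) (kstar - s) = inner kstar kstar - 2 * (\<Sum>x\<in>Sx. c x * eval_fun kx kstar x)
        + (\<Sum>x\<in>Sx. \<Sum>x'\<in>Sx. c x * c x' * inner (kx x) (kx x'))" .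
    moreover have "inner (kstar - s) (kstar - s) = ln\<^sup>2 * inner r r"
      unfolding ks by (simp add: power2_eq_square)
    ultimately show ?thesis by (simp add: power2_norm_eq_inner)
  qed
  have cg: "centred_gaussian M G (ln\<^sup>2 * inner r r)"
    using gp fSx unfolding gp_with_functional_def vv[symmetric] Geq[symmetric] by blast
  note GM = gauss_moments[OF M cg]
  have Gm: "G \<in> borel_measurable M" using cg unfolding centred_gaussian_def by blast
  define gen1 where "gen1 = {L -` B \<inter> space M | B. B \<in> sets borel}
                               \<union> (\<Union>x. {F x -` B \<inter> space M | B. B \<in> sets borel})"
  define gen2 where "gen2 = (\<Union>i<n. {e i -` B \<inter> space M | B. B \<in> sets borel})"
  define N where "N = measure_of (space M) gen1 (\<lambda>_. 0)"
  have g1: "gen1 \<subseteq> Pow (space M)" unfolding gen1_def by auto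
  have spN: "space N = space M" unfolding N_def by (rule space_measure_of_conv)
  have sN: "sets N = sigma_sets (space M) gen1" unfolding N_def by (rule sets_measure_of[OF g1])
  have LN[measurable]: "L \<in> borel_measurable N"
  proof (rule measurableI)
    fix A :: "real set" assume "A \<in> sets borel"
    then have "L -` A \<inter> space M \<in> gen1" unfolding gen1_def by blast
    then show "L -` A \<inter> space N \<in> sets N" unfolding spN sN by blast
  qed simp
  have FN[measurable]: "F x \<in> borel_measurable N" for x
  proof (rule measurableI)
    fix A :: "real set" assume "A \<in> sets borel"
    then have "F x -` A \<inter> space M \<in> gen1" unfolding gen1_def by blast
    then show "F x -` A \<inter> space N \<in> sets N" unfolding spN sN by blast
  qed simp
  have GN: "G \<in> borel_measurable N" unfolding G_def by measurable
  have Ge: "\<forall>i<n. integrable M (\<lambda>w. G w * e i w) \<and> expectation (\<lambda>w. G w * e i w) = 0"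
  proof (intro allI impI)
    fix i assume i: "i < n"
    have ind0: "indep_set (sigma_sets (space M) gen1) (sigma_sets (space M) gen2)"
      using e_indep_gp unfolding gen1_def gen2_def .
    have s1: "sigma_sets (space M) {G -` A \<inter> space M | A. A \<in> sets borel} \<subseteq> sigma_sets (space M) gen1"
    proof (rule sigma_sets_mono)
      show "{G -` A \<inter> space M | A. A \<in> sets borel} \<subseteq> sigma_sets (space M) gen1"
        using measurable_sets[OF GN] unfolding spN sN by blast
    qed
    have s2: "sigma_sets (space M) {e i -` A \<inter> space M | A. A \<in> sets borel} \<subseteq> sigma_sets (space M) gen2"
      by (rule sigma_sets_subseteq) (use i in \<open>auto simp: gen2_def\<close>)
    have "indep_set (sigma_sets (space M) {G -` A \<inter> space M | A. A \<in> sets borel})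
                    (sigma_sets (space M) {e i -` A \<inter> space M | A. A \<in> sets borel})"
      using ind0 s1 s2 unfolding indep_set_def
      by (elim indep_sets_mono_sets) (auto split: bool.split)
    then have iv: "indep_var borel G borel (e i)"
      unfolding indep_var_eq using Gm emeas[OF i] by simp
    have "integrable M G" using GM by blast
    then show "integrable M (\<lambda>w. G w * e i w) \<and> expectation (\<lambda>w. G w * e i w) = 0"
      using indep_var_integrable[OF iv _ eint[OF i]] indep_var_lebesgue_integral[OF iv _ eint[OF i]]
        e_mean i by simp
  qed
  have pw2: "(inner kstar (f_hat kx kz n X Z lam nu (\<lambda>i. F (X i) w + e i w)) - L w)\<^sup>2
        = (G w + (\<Sum>i<n. b i * e i w))\<^sup>2" for w
    using F4 unfolding G_def by (simp add: distrib_left sum.distrib algebra_simps)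
  have gpval: "expectation (\<lambda>w. (inner kstar (f_hat kx kz n X Z lam nu (\<lambda>i. F (X i) w + e i w)) - L w)\<^sup>2)
      = ln\<^sup>2 * inner r r + q"
    unfolding pw2 q_def using NE[of G b] GM Ge by simp
  show ?thesis
    using F1 F2 F3 F6 sup gpval unfolding ln_def q_def DD_def by simp
qed

end
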